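(* Let $n\ge4$ and let $\sigma_1,\dots,\sigma_n>0$ be such that the sequence $(0,\sigma_1^2,\dots,\sigma_n^2,0)$ is concave. Then $$\frac{n-1}{n}\sum_{i=1}^n\sigma_i^2\;>\;2\max_{\substack{x\in\mathbb{R}^n\setminus\{0\}\\ x_1+\cdots+x_n=0}}\frac{\sigma_1^2x_1^2+\cdots+\sigma_n^2x_n^2}{x_1^2+\cdots+x_n^2}.$$
   Context: A finite sequence $(a_1,\dots,a_m)$ is concave if every three consecutive elements satisfy $a_{i+1}\ge\frac12(a_i+a_{i+2})$. *)

theory Defs
  imports "HOL-Analysis.Analysis"
begin

definition concave_seq :: "real list \<Rightarrow> bool" where
  "concave_seq a \<longleftrightarrow>
     (\<forall>i. i + 2 < length a \<longrightarrow> a ! (i+1) \<ge> (a ! i + a ! (i+2)) / 2)"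

definition rayleigh_values :: "nat \<Rightarrow> (nat \<Rightarrow> real) \<Rightarrow> real set" where
  "rayleigh_values n \<sigma> =
     {(\<Sum>i=1..n. (\<sigma> i)^2 * (x i)^2) / (\<Sum>i=1..n. (x i)^2) | x.
        (\<exists>i\<in>{1..n}. x i \<noteq> 0) \<and> (\<Sum>i=1..n. x i) = 0}"

end

theory Submission
  imports Defs
begin

lemma chord_aux:
  fixes b :: "nat \<Rightarrow> real"
  assumes b0: "b 0 = 0"
    and conc: "\<And>i. i + 2 \<le> N \<Longrightarrow> b i + b (i+2) \<le> 2 * b (i+1)"
    and i1: "1 \<le> i" and ik: "i \<le> k" and kN: "k \<le> N"
  shows "real i * b k \<le> real k * b i"
proof (cases "i = k")
  case True then show ?thesis by simp
next
  case False
  define D where "D j = b (Suc j) - b j" for j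
  have Dst: "D (j+1) \<le> D j" if "j + 2 \<le> N" for j
    using conc[OF that] unfolding D_def by (simp add: numeral_2_eq_2)
  have Dmono: "D l \<le> D j" if "j \<le> l" "l + 1 \<le> N" for j l
    using that
  proof (induction l rule: dec_induct)
    case base then show ?case by simp
  next
    case (step m) then show ?case using Dst[of m] by simp
  qed
  have iD: "real j * D j \<le> b j" if "j < N" for j
    using that
  proof (induction j)
    case 0 then show ?case using b0 by simp
  next
    case (Suc j)
    have "D (j+1) \<le> D j" using Dst[of j] Suc.prems by simp
    moreover have "real j * D j \<le> b j" using Suc by simp
    moreover have "b (Suc j) = b j + D j" unfolding D_def by simp
    ultimately have "real (Suc j) * D (Suc j) \<le> real (Suc j) * D j"
      by (intro mult_left_mono) auto
    then show ?case using \<open>real j * D j \<le> b j\<close> \<open>b (Suc j) = b j + D j\<close>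
      by (simp add: algebra_simps)
  qed
  have iN: "i < N" using False ik kN by simp
  have bk: "b m \<le> b i + real (m - i) * D i" if "i \<le> m" "m \<le> N" for m
    using that
  proof (induction m rule: dec_induct)
    case base then show ?case by simp
  next
    case (step m)
    have "D m \<le> D i" using Dmono[of i m] step by simp
    moreover have "b (Suc m) = b m + D m" unfolding D_def by simp
    moreover have "real (Suc m - i) = real (m - i) + 1" using step by simp
    ultimately show ?case using step by (simp add: algebra_simps)
  qed
  have h1: "b k \<le> b i + real (k - i) * D i" using bk ik kN by simp
  have h2: "real i * D i \<le> b i" using iD iN by simp
  have "real i * b k \<le> real i * b i + real (k - i) * (real i * D i)"
    using mult_left_mono[OF h1, of "real i"] by (simp add: algebra_simps)
  also have "\<dots> \<le> real i * b i + real (k - i) * b i"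
    using mult_left_mono[OF h2, of "real (k-i)"] by simp
  also have "\<dots> = real k * b i" using ik by (simp add: of_nat_diff algebra_simps)
  finally show ?thesis .
qed

lemma half_sum:
  fixes b :: "nat \<Rightarrow> real"
  assumes b0: "b 0 = 0"
    and conc: "\<And>i. i + 2 \<le> N \<Longrightarrow> b i + b (i+2) \<le> 2 * b (i+1)"
    and k1: "1 \<le> k" and kN: "k \<le> N"
  shows "(real k + 1) / 2 * b k \<le> (\<Sum>i=1..k. b i)"
proof -
  have "(\<Sum>i=1..k. real i * b k / real k) \<le> (\<Sum>i=1..k. b i)"
  proof (rule sum_mono)
    fix i assume "i \<in> {1..k}"
    then have "real i * b k \<le> real k * b i" using \<open>i \<in> {1..k}\<close> kN by (intro chord_aux[where N=N and b=b, OF b0 conc]) auto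
    then show "real i * b k / real k \<le> b i" using k1 by (simp add: divide_simps mult.commute)
  qed
  moreover have "(\<Sum>i=1..k. real i * b k / real k) = (real k + 1) / 2 * b k"
  proof -
    have "(\<Sum>i=1..k. real i * b k / real k) = (\<Sum>i=1..k. real i) * b k / real k"
      by (simp add: sum_distrib_right sum_divide_distrib)
    also have "(\<Sum>i=1..k. real i) = real k * (real k + 1) / 2"
      using double_gauss_sum_from_Suc_0[of k, where 'a=real] by simp
    also have "real k * (real k + 1) / 2 * b k / real k = (real k + 1) / 2 * b k"
      using k1 by simp
    finally show ?thesis .
  qed
  ultimately have "(\<Sum>i=1..k. real i * b k / real k) = (real k + 1) / 2 * b k" by simp
  then show ?thesis using \<open>(\<Sum>i=1..k. real i * b k / real k) \<le> (\<Sum>i=1..k. b i)\<close> by simp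
qed


lemma tent_sum:
  fixes b :: "nat \<Rightarrow> real"
  assumes b0: "b 0 = 0" and bn: "b (n+1) = 0"
    and conc: "\<And>i. i + 2 \<le> n + 1 \<Longrightarrow> b i + b (i+2) \<le> 2 * b (i+1)"
    and k1: "1 \<le> k" and kn: "k \<le> n"
  shows "(real n + 1) / 2 * b k \<le> (\<Sum>i=1..n. b i)"
proof -
  define c where "c j = b (n + 1 - j)" for j
  have c0: "c 0 = 0" using bn by (simp add: c_def)
  have cconc: "c i + c (i+2) \<le> 2 * c (i+1)" if "i + 2 \<le> n + 1" for i
  proof -
    have "b (n-1-i) + b (n-1-i+2) \<le> 2 * b (n-1-i+1)" using conc[of "n-1-i"] that by simp
    moreover have "n-1-i+2 = n+1-i" "n-1-i+1 = n+1-(i+1)" "n-1-i = n+1-(i+2)" using that by auto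
    ultimately show ?thesis unfolding c_def by (simp add: add.commute)
  qed
  have A: "(real k + 1) / 2 * b k \<le> (\<Sum>i=1..k. b i)"
    by (rule half_sum[where N="n+1", OF b0 conc]) (use k1 kn in auto)
  have B0: "(real (n+1-k) + 1) / 2 * c (n+1-k) \<le> (\<Sum>j=1..n+1-k. c j)"
    by (rule half_sum[where N="n+1", OF c0 cconc]) (use k1 kn in auto)
  have cr: "(\<Sum>j=1..n+1-k. c j) = (\<Sum>i=k..n. b i)"
    unfolding c_def
    by (rule sum.reindex_bij_witness[where i="\<lambda>i. n+1-i" and j="\<lambda>j. n+1-j"]) (use k1 kn in auto)
  have ck: "c (n+1-k) = b k" using kn by (simp add: c_def)
  have B: "(real n - real k + 2) / 2 * b k \<le> (\<Sum>i=k..n. b i)"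
    proof -
    have "real (n+1-k) = real n - real k + 1" using kn by (simp add: of_nat_diff)
    then show ?thesis using B0 cr ck by (simp add: ac_simps)
  qed
  have S1: "(\<Sum>i=1..n. b i) = (\<Sum>i=1..k. b i) + (\<Sum>i=Suc k..n. b i)"
  proof -
    have "{1..n} = {1..k} \<union> {Suc k..n}" using k1 kn by auto
    then have "(\<Sum>i=1..n. b i) = sum b ({1..k} \<union> {Suc k..n})" by simp
    also have "\<dots> = (\<Sum>i=1..k. b i) + (\<Sum>i=Suc k..n. b i)" by (rule sum.union_disjoint) auto
    finally show ?thesis .
  qed
  have S2: "(\<Sum>i=k..n. b i) = b k + (\<Sum>i=Suc k..n. b i)"
    using kn by (simp add: sum.atLeast_Suc_atMost)
  show ?thesis using A B S1 S2 by (simp add: algebra_simps add_divide_distrib diff_divide_distrib)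
qed

lemma four:
  fixes a1 a2 a3 a4 x1 x2 x3 x4 :: real
  assumes c1: "a2 \<le> 2*a1" and c2: "a1 + a3 \<le> 2*a2" and c3: "a2 + a4 \<le> 2*a3" and c4: "a3 \<le> 2*a4"
    and s: "x1 + x2 + x3 + x4 = 0"
  shows "100*(a1*x1^2 + a2*x2^2 + a3*x3^2 + a4*x4^2) \<le> 37*(a1+a2+a3+a4)*(x1^2+x2^2+x3^2+x4^2)"
proof -
  have x4: "x4 = -(x1+x2+x3)" using s by simp
  define d1 where "d1 = 2*a1 - a2"
  define d2 where "d2 = 2*a2 - a1 - a3"
  define d3 where "d3 = 2*a3 - a2 - a4"
  define d4 where "d4 = 2*a4 - a3"
  define Q1 where "Q1 = -6*x1^2 + 14*x2^2 + 34*x3^2 + 54*x4^2"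
  define Q2 where "Q2 = 51*x1^2 - 9*x2^2 + 31*x3^2 + 71*x4^2"
  define Q3 where "Q3 = 71*x1^2 + 31*x2^2 - 9*x3^2 + 51*x4^2"
  define Q4 where "Q4 = 54*x1^2 + 34*x2^2 + 14*x3^2 - 6*x4^2"
  have q1: "Q1 = 100*(12/25*(x1 + 9/8*x2 + 9/8*x3)^2 + 29/400*(x2 - 27/29*x3)^2 + 152/725*x3^2)"
    unfolding Q1_def x4 by algebra
  have q2: "Q2 = 100*(61/50*(x1 + 71/122*x2 + 71/122*x3)^2 + 2523/12200*(x2 + 1207/841*x3)^2 + 3802/21025*x3^2)"
    unfolding Q2_def x4 by algebra
  have q3: "Q3 = 100*(61/50*(x1 + 51/122*x2 + 51/122*x3)^2 + 7403/12200*(x2 + 3621/7403*x3)^2 + 11406/185075*x3^2)"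
    unfolding Q3_def x4 by algebra
  have q4: "Q4 = 100*(12/25*(x1 - 1/8*x2 - 1/8*x3)^2 + 109/400*(x2 - 27/109*x3)^2 + 152/2725*x3^2)"
    unfolding Q4_def x4 by algebra
  have "Q1 \<ge> 0" "Q2 \<ge> 0" "Q3 \<ge> 0" "Q4 \<ge> 0" unfolding q1 q2 q3 q4 by (intro mult_nonneg_nonneg add_nonneg_nonneg; simp)+
  moreover have "d1 \<ge> 0" "d2 \<ge> 0" "d3 \<ge> 0" "d4 \<ge> 0" using c1 c2 c3 c4 by (simp_all add: d1_def d2_def d3_def d4_def)
  ultimately have "0 \<le> d1*Q1 + d2*Q2 + d3*Q3 + d4*Q4" by (intro add_nonneg_nonneg mult_nonneg_nonneg)
  moreover have "37*(a1+a2+a3+a4)*(x1^2+x2^2+x3^2+x4^2) - 100*(a1*x1^2 + a2*x2^2 + a3*x3^2 + a4*x4^2)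
     = d1*Q1 + d2*Q2 + d3*Q3 + d4*Q4"
    unfolding d1_def d2_def d3_def d4_def Q1_def Q2_def Q3_def Q4_def by algebra
  ultimately show ?thesis by linarith
qed


lemma sum4: "(\<Sum>i=1..4. f i) = f 1 + f 2 + f 3 + f (4::nat)" for f :: "nat \<Rightarrow> real"
proof -
  have "{1..4::nat} = {1,2,3,4}" by auto
  then show ?thesis by simp
qed

theorem mainTheorem6:
  fixes n :: nat and \<sigma> :: "nat \<Rightarrow> real"
  assumes "n \<ge> 4"
    and "\<And>i. i \<in> {1..n} \<Longrightarrow> \<sigma> i > 0"
    and "concave_seq ([0] @ map (\<lambda>i. (\<sigma> i)^2) [1..<n+1] @ [0])"
  shows "(real n - 1) / real n * (\<Sum>i=1..n. (\<sigma> i)^2) > 2 * Sup (rayleigh_values n \<sigma>)"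
proof -
  define L where "L = [0] @ map (\<lambda>i. (\<sigma> i)^2) [1..<n+1] @ [0]"
  define b where "b i = (if 1 \<le> i \<and> i \<le> n then (\<sigma> i)^2 else 0)" for i
  have lenL: "length L = n + 2" by (simp add: L_def)
  have Lnth: "L ! i = b i" if "i \<le> n+1" for i
  proof (cases "i = 0")
    case True then show ?thesis by (simp add: L_def b_def)
  next
    case False
    then obtain j where j: "i = Suc j" by (cases i) auto
    show ?thesis
    proof (cases "j < n")
      case True then show ?thesis using j by (simp add: L_def b_def nth_append del: upt_Suc)
    next
      case False then have "j = n" using that j by simp
      then show ?thesis using j by (simp add: L_def b_def nth_append del: upt_Suc)
    qed
  qed
  have conc: "b i + b (i+2) \<le> 2 * b (i+1)" if "i + 2 \<le> n + 1" for i
  proof -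
    have "L ! (i+1) \<ge> (L ! i + L ! (i+2)) / 2"
      using assms(3) that lenL unfolding concave_seq_def L_def[symmetric] by auto
    then show ?thesis using Lnth[of i] Lnth[of "i+1"] Lnth[of "i+2"] that by simp
  qed
  have b0: "b 0 = 0" and bn: "b (n+1) = 0" by (simp_all add: b_def)
  define T where "T = (\<Sum>i=1..n. (\<sigma> i)^2)"
  have Tb: "T = (\<Sum>i=1..n. b i)" unfolding T_def by (rule sum.cong) (auto simp: b_def)
  have apos: "(\<sigma> i)^2 > 0" if "i \<in> {1..n}" for i using assms(2)[OF that] by simp
  have Tpos: "T > 0" unfolding T_def using assms(1) apos by (intro sum_pos) auto
  define x0 where "x0 (i::nat) = (if i = 1 then 1 else if i = 2 then -1 else (0::real))" for i
  have n12: "{1..n} = insert 1 (insert 2 {3..n})" using assms(1) by auto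
  have "(\<Sum>i=1..n. (\<sigma> i)^2 * (x0 i)^2) / (\<Sum>i=1..n. (x0 i)^2) \<in> rayleigh_values n \<sigma>"
    unfolding rayleigh_values_def
  proof (intro CollectI exI conjI)
    show "\<exists>i\<in>{1..n}. x0 i \<noteq> 0" using assms(1) by (intro bexI[of _ 1]) (auto simp: x0_def)
    show "(\<Sum>i=1..n. x0 i) = 0" unfolding n12 by (simp add: x0_def)
  qed (rule refl)
  then have ne: "rayleigh_values n \<sigma> \<noteq> {}" by blast
  have gen: "Sup (rayleigh_values n \<sigma>) \<le> B"
    if H: "\<And>x. (\<Sum>i=1..n. x i) = 0 \<Longrightarrow> (\<Sum>i=1..n. (\<sigma> i)^2 * (x i)^2) \<le> B * (\<Sum>i=1..n. (x i)^2)" for B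
  proof (rule cSup_least[OF ne])
    fix v assume "v \<in> rayleigh_values n \<sigma>"
    then obtain x where v: "v = (\<Sum>i=1..n. (\<sigma> i)^2 * (x i)^2) / (\<Sum>i=1..n. (x i)^2)"
      and nz: "\<exists>i\<in>{1..n}. x i \<noteq> 0" and s0: "(\<Sum>i=1..n. x i) = 0"
      unfolding rayleigh_values_def by blast
    have pos: "(\<Sum>i=1..n. (x i)^2) > 0"
    proof -
      obtain i where "i \<in> {1..n}" "x i \<noteq> 0" using nz by blast
      then show ?thesis by (intro sum_pos2[where i=i]) auto
    qed
    show "v \<le> B" unfolding v using H[OF s0] pos by (simp add: pos_divide_le_eq)
  qed
  show ?thesis
  proof (cases "n = 4")
    case True
    have sb: "Sup (rayleigh_values n \<sigma>) \<le> 37/100 * T"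
    proof (rule gen)
      fix x :: "nat \<Rightarrow> real" assume "(\<Sum>i=1..n. x i) = 0"
      then have s: "x 1 + x 2 + x 3 + x 4 = 0" using True sum4[of x] by simp
      have c0: "b 0 + b 2 \<le> 2 * b 1" using conc[of 0] True by (simp add: eval_nat_numeral)
      have c1: "b 1 + b 3 \<le> 2 * b 2" using conc[of 1] True by (simp add: eval_nat_numeral)
      have c2: "b 2 + b 4 \<le> 2 * b 3" using conc[of 2] True by (simp add: eval_nat_numeral)
      have c3: "b 3 + b 5 \<le> 2 * b 4" using conc[of 3] True by (simp add: eval_nat_numeral)
      have bv: "b 0 = 0" "b 1 = (\<sigma> 1)^2" "b 2 = (\<sigma> 2)^2" "b 3 = (\<sigma> 3)^2" "b 4 = (\<sigma> 4)^2" "b 5 = 0"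
        using True by (simp_all add: b_def)
      have "100*((\<sigma> 1)^2*(x 1)^2 + (\<sigma> 2)^2*(x 2)^2 + (\<sigma> 3)^2*(x 3)^2 + (\<sigma> 4)^2*(x 4)^2)
          \<le> 37*((\<sigma> 1)^2+(\<sigma> 2)^2+(\<sigma> 3)^2+(\<sigma> 4)^2)*((x 1)^2+(x 2)^2+(x 3)^2+(x 4)^2)"
        by (rule four) (use c0 c1 c2 c3 bv s in simp_all)
      then show "(\<Sum>i=1..n. (\<sigma> i)^2 * (x i)^2) \<le> 37/100 * T * (\<Sum>i=1..n. (x i)^2)"
        unfolding T_def True sum4 by simp
    qed
    have eq: "(real n - 1) / real n * T = 3/4 * T" using True by simp
    have "2 * Sup (rayleigh_values n \<sigma>) < (real n - 1) / real n * T" unfolding eq using sb Tpos by linarith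
    then show ?thesis unfolding T_def .
  next
    case False
    then have n5: "n \<ge> 5" using assms(1) by simp
    define M where "M = Max ((\<lambda>i. (\<sigma> i)^2) ` {1..n})"
    have "M \<in> (\<lambda>i. (\<sigma> i)^2) ` {1..n}" unfolding M_def using assms(1) by (intro Max_in) auto
    then obtain k where k: "k \<in> {1..n}" and Mk: "M = (\<sigma> k)^2" by blast
    have Mge: "(\<sigma> i)^2 \<le> M" if "i \<in> {1..n}" for i unfolding M_def using that by (intro Max_ge) auto
    have Mpos: "M > 0" using apos[OF k] Mk by simp
    have "Sup (rayleigh_values n \<sigma>) \<le> M"
    proof (rule gen)
      fix x :: "nat \<Rightarrow> real"
      have "(\<Sum>i=1..n. (\<sigma> i)^2 * (x i)^2) \<le> (\<Sum>i=1..n. M * (x i)^2)"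
        using Mge by (intro sum_mono mult_right_mono) auto
      then show "(\<Sum>i=1..n. (\<sigma> i)^2 * (x i)^2) \<le> M * (\<Sum>i=1..n. (x i)^2)"
        by (simp add: sum_distrib_left)
    qed
    moreover have "(real n + 1) / 2 * M \<le> T"
    proof -
      have "(real n + 1) / 2 * b k \<le> (\<Sum>i=1..n. b i)"
        by (rule tent_sum[OF b0 bn conc]) (use k in auto)
      then show ?thesis using Tb Mk k by (simp add: b_def)
    qed
    moreover have "2 * M < (real n - 1) / real n * ((real n + 1) / 2 * M)"
    proof -
      have nn: "real n \<ge> 5" using n5 by simp
      have h: "0 \<le> real n * (real n - 5)" using nn by simp
      have e: "(real n - 1)*(real n+1) = real n*(real n - 5) + 4*real n + (real n - 1)" by algebra
      have g: "(real n - 1) * (real n + 1) > 4 * real n" using h e nn by linarith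
      have "2 * M = (4 * real n) * M / (2 * real n)" using nn by simp
      also have "\<dots> < ((real n - 1) * (real n + 1)) * M / (2 * real n)"
        using g Mpos nn by (intro divide_strict_right_mono mult_strict_right_mono) auto
      also have "\<dots> = (real n - 1) / real n * ((real n + 1) / 2 * M)" using nn by (simp add: field_simps)
      finally show ?thesis .
    qed
    moreover have "(real n - 1) / real n * ((real n + 1) / 2 * M) \<le> (real n - 1) / real n * T"
      using \<open>(real n + 1) / 2 * M \<le> T\<close> n5 by (intro mult_left_mono) auto
    ultimately show ?thesis unfolding T_def by linarith
  qed
qed

end
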